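(* Let $f\in\mathbb{R}[X_1,\dots,X_n]$ be a non-constant polynomial of degree $2d$ such that $|\alpha|<2d$ for each $\alpha\in\Delta$ and $f_{2d,i}>0$ for $i=1,\dots,n$. Let $$k\ \ge\ \max_{i=1,\dots,n} C\Big(t^{2d}-\frac{1}{2d}\sum_{\alpha\in\Delta}\alpha_i|f_{\alpha}|f_{2d,i}^{-\frac{|\alpha|}{2d}}t^{|\alpha|}\Big)$$ and $$r_L:=f_0-\frac{1}{2d}\sum_{\alpha\in\Delta}(2d-|\alpha|)|f_{\alpha}|k^{|\alpha|}(f_{2d}^{-\alpha})^{\frac{1}{2d}}.$$ Then $f_{gp}\ge r_L$.
   Context: $\mathbb{N}=\{0,1,2,\dots\}$. For $\alpha\in\mathbb{N}^n$ write $\underline{X}^\alpha=X_1^{\alpha_1}\cdots X_n^{\alpha_n}$, $|\alpha|=\sum_i\alpha_i$, and for $a\in\mathbb{R}^n$, $a^{\alpha}=\prod_i a_i^{\alpha_i}$ with $0^0=1$. For $f=\sum_\alpha f_\alpha\underline{X}^\alpha$ of degree $2d$: $f_0$ constant term, $f_{2d,i}$ coefficient of $X_i^{2d}$, $f_{2d}^{-\alpha}:=\prod_{i=1}^n f_{2d,i}^{-\alpha_i}$, $\Omega=\{\alpha: f_\alpha\ne0\}\setminus\{\underline{0},2d\epsilon_1,\dots,2d\epsilon_n\}$, $\Delta=\{\alpha\in\Omega:\ f_\alpha<0\text{ or }\alpha_i\text{ odd for some }i\}$, $\Delta^{<2d}=\{\alpha\in\Delta:|\alpha|<2d\}$. $f_{gp}$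 is the supremum (with $\sup\emptyset=-\infty$) of all $r\in\mathbb{R}$ for which there exist reals $a_{\alpha,i}\ge0$ ($\alpha\in\Delta$, $i=1,\dots,n$), $a_{\alpha,i}=0$ iff $\alpha_i=0$, with, for $a_\alpha=(a_{\alpha,1},\dots,a_{\alpha,n})$: (1) $(2d)^{2d}a_\alpha^\alpha=|f_\alpha|^{2d}\alpha^\alpha$ for $\alpha\in\Delta$, $|\alpha|=2d$; (2) $f_{2d,i}\ge\sum_{\alpha\in\Delta}a_{\alpha,i}$ for all $i$; (3) $f_0-r\ge\sum_{\alpha\in\Delta^{<2d}}(2d-|\alpha|)\big[\frac{|f_\alpha|^{2d}\alpha^\alpha}{(2d)^{2d}a_\alpha^\alpha}\big]^{1/(2d-|\alpha|)}$. For a univariate polynomial $p(t)=t^N-\sum_{j=0}^{N-1}c_jt^j$ with all $c_j\ge0$ and at least one $c_j\neq0$, $C(p)$ denotes the unique positive root of $p$; by convention $C(t^N):=0$. *)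

theory Defs
  imports Complex_Main "HOL-Computational_Algebra.Polynomial" "HOL-Library.Extended_Real"
begin

text \<open>A real polynomial in the variables X_0,...,X_{n-1} is represented by its coefficient
  function on exponent vectors alpha :: nat => nat (with alpha i = 0 for i >= n),
  having finite support.\<close>

definition is_mpoly :: "nat \<Rightarrow> ((nat \<Rightarrow> nat) \<Rightarrow> real) \<Rightarrow> bool" where
  "is_mpoly n f \<longleftrightarrow> finite {\<alpha>. f \<alpha> \<noteq> 0} \<and> (\<forall>\<alpha>. f \<alpha> \<noteq> 0 \<longrightarrow> (\<forall>i\<ge>n. \<alpha> i = 0))"

definition mdeg :: "nat \<Rightarrow> (nat \<Rightarrow> nat) \<Rightarrow> nat" where
  "mdeg n \<alpha> = (\<Sum>i<n. \<alpha> i)"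

definition total_degree :: "nat \<Rightarrow> ((nat \<Rightarrow> nat) \<Rightarrow> real) \<Rightarrow> nat" where
  "total_degree n f = Max (insert 0 (mdeg n ` {\<alpha>. f \<alpha> \<noteq> 0}))"

definition unit_exp :: "nat \<Rightarrow> nat \<Rightarrow> (nat \<Rightarrow> nat)" where
  "unit_exp i m = (\<lambda>j. if j = i then m else 0)"

definition const_coeff :: "((nat \<Rightarrow> nat) \<Rightarrow> real) \<Rightarrow> real" where
  "const_coeff f = f (\<lambda>_. 0)"

definition top_coeff :: "nat \<Rightarrow> ((nat \<Rightarrow> nat) \<Rightarrow> real) \<Rightarrow> nat \<Rightarrow> real" where
  "top_coeff d f i = f (unit_exp i (2*d))"

definition Omega :: "nat \<Rightarrow> nat \<Rightarrow> ((nat \<Rightarrow> nat) \<Rightarrow> real) \<Rightarrow> (nat \<Rightarrow> nat) set" where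
  "Omega n d f = {\<alpha>. f \<alpha> \<noteq> 0} - insert (\<lambda>_. 0) {unit_exp i (2*d) | i. i < n}"

definition Delta :: "nat \<Rightarrow> nat \<Rightarrow> ((nat \<Rightarrow> nat) \<Rightarrow> real) \<Rightarrow> (nat \<Rightarrow> nat) set" where
  "Delta n d f = {\<alpha> \<in> Omega n d f. f \<alpha> < 0 \<or> (\<exists>i<n. odd (\<alpha> i))}"

definition vpow :: "nat \<Rightarrow> (nat \<Rightarrow> real) \<Rightarrow> (nat \<Rightarrow> nat) \<Rightarrow> real" where
  "vpow n a \<alpha> = (\<Prod>i<n. a i ^ \<alpha> i)"

definition gp_set :: "nat \<Rightarrow> nat \<Rightarrow> ((nat \<Rightarrow> nat) \<Rightarrow> real) \<Rightarrow> real set" where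
  "gp_set n d f = {r. \<exists>a :: (nat \<Rightarrow> nat) \<Rightarrow> nat \<Rightarrow> real.
     (\<forall>\<alpha>\<in>Delta n d f. \<forall>i<n. a \<alpha> i \<ge> 0 \<and> (a \<alpha> i = 0 \<longleftrightarrow> \<alpha> i = 0)) \<and>
     (\<forall>\<alpha>\<in>Delta n d f. mdeg n \<alpha> = 2*d \<longrightarrow>
        (2*d) ^ (2*d) * vpow n (a \<alpha>) \<alpha> = \<bar>f \<alpha>\<bar> ^ (2*d) * vpow n (\<lambda>i. real (\<alpha> i)) \<alpha>) \<and>
     (\<forall>i<n. top_coeff d f i \<ge> (\<Sum>\<alpha>\<in>Delta n d f. a \<alpha> i)) \<and>
     const_coeff f - r \<ge> (\<Sum>\<alpha>\<in>{\<alpha>\<in>Delta n d f. mdeg n \<alpha> < 2*d}.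
        real (2*d - mdeg n \<alpha>) *
        ((\<bar>f \<alpha>\<bar> ^ (2*d) * vpow n (\<lambda>i. real (\<alpha> i)) \<alpha>) /
           ((2*d) ^ (2*d) * vpow n (a \<alpha>) \<alpha>)) powr (1 / real (2*d - mdeg n \<alpha>)))}"

text \<open>f_gp, as an extended real (sup of the empty set is -infinity).\<close>
definition f_gp :: "nat \<Rightarrow> nat \<Rightarrow> ((nat \<Rightarrow> nat) \<Rightarrow> real) \<Rightarrow> ereal" where
  "f_gp n d f = Sup (ereal ` gp_set n d f)"

text \<open>C(p): the unique positive root of p = t^N - sum c_j t^j (c_j >= 0, not all zero);
  by convention C(t^N) = 0.\<close>
definition Cbound :: "real poly \<Rightarrow> real" where
  "Cbound p = (if p = monom 1 (degree p) then 0 else (THE t. t > 0 \<and> poly p t = 0))"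

end

theory Submission
  imports Defs
begin


lemma aux_cancel:
  fixes x y z q A :: real
  assumes "0 < A"
  shows "x * A / (y * (A * z * q)) = x / y / (z * q)"
  using assms by (simp add: field_simps)

lemma key_alg:
  fixes D m :: nat and c k Q A :: real
  assumes "m < D" "0<c" "0<k" "0<Q" "0<A"
  shows "real (D - m) * ((c ^ D * A) / (real D ^ D * (A * (c / real D * (k^m / k^D)) ^ m
            * Q powr (1 - real m / real D)))) powr (1 / real (D - m))
         = real (D-m) * (c * k^m * Q powr (- 1 / real D)) / real D"
proof -
  obtain j where D: "D = m + j" and j: "j > 0" using assms(1) by (metis less_imp_add_positive)
  have Dpos: "real D > 0" using D j by simp
  define X where "X = c / real D * k^m * Q powr (- 1 / real D)"
  have Xpos: "X > 0" unfolding X_def using assms Dpos by simp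
  define q1 where "q1 = Q powr (1 - real m / real D)"
  define q2 where "q2 = Q powr (- 1 / real D)"
  have q1pos: "q1 > 0" unfolding q1_def using assms by simp
  have qq: "q2 ^ j * q1 = 1"
  proof -
    have "q2 ^ j = Q powr (real j * (- 1 / real D))" unfolding q2_def
      using assms by (simp add: powr_power)
    also have "real j * (- 1 / real D) = - (1 - real m / real D)"
      using Dpos D by (simp add: field_simps)
    finally show ?thesis unfolding q1_def using assms by (simp add: powr_add[symmetric])
  qed
  have R: "(c ^ D * A) / (real D ^ D * (A * (c / real D * (k^m / k^D)) ^ m * q1)) = X ^ j"
  proof -
    define u where "u = c / real D"
    define K where "K = k^m / k^D"
    have upos: "u > 0" "K > 0" unfolding u_def K_def using assms Dpos by auto
    have e1a: "u ^ D = c ^ D / real D ^ D" unfolding u_def by (rule power_divide)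
    have e1b: "u ^ D = u^m * u^j" unfolding D by (rule power_add)
    have e1: "c ^ D / real D ^ D = u^m * u^j" using e1a e1b by simp
    have kD: "k ^ D > 0" using assms by simp
    have e2a: "K^m = (k^m)^m / (k^D)^m" unfolding K_def by (rule power_divide)
    have e2b: "(k^m)^m * (k^m)^j = (k^m)^D" unfolding D by (rule power_add[symmetric])
    have e2c: "(k^m)^D = (k^D)^m" unfolding power_mult[symmetric] by (simp only: mult.commute)
    have e2: "K ^ m * (k^m)^j = 1"
    proof -
      have "K ^ m * (k^m)^j = ((k^m)^m * (k^m)^j) / (k^D)^m" unfolding e2a by simp
      also have "... = 1" unfolding e2b e2c using assms(3) by simp
      finally show ?thesis .
    qed
    have X: "X ^ j = u^j * (k^m)^j * q2^j" unfolding X_def q2_def u_def power_mult_distrib by (rule refl)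
    have "(c ^ D * A) / (real D ^ D * (A * (c / real D * (k^m / k^D)) ^ m * q1))
        = (c ^ D / real D ^ D) / (u ^ m * K ^ m * q1)"
      unfolding u_def[symmetric] K_def[symmetric] power_mult_distrib using assms(5) by (rule aux_cancel)
    also have "... = u^j / (K^m * q1)" unfolding e1 using upos q1pos by simp
    also have "... = u^j * (k^m)^j * q2^j"
    proof -
      have "K^m * q1 * ((k^m)^j * q2^j) = 1" using e2 qq by (simp add: algebra_simps)
      then have "inverse (K^m * q1) = (k^m)^j * q2^j" by (rule inverse_unique)
      then show ?thesis by (simp add: divide_inverse mult.assoc)
    qed
    finally show ?thesis using X by simp
  qed
  have "X ^ j = X powr real j" using Xpos by (simp add: powr_realpow)
  then have "(X ^ j) powr (1 / real j) = X" using j Xpos by (simp add: powr_powr)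
  moreover have Dm: "D - m = j" using D by simp
  moreover have "(c ^ D * A) / (real D ^ D * (A * (c / real D * (k^m / k^D)) ^ m
            * Q powr (1 - real m / real D))) = X ^ j" using R unfolding q1_def .
  ultimately show ?thesis unfolding X_def q2_def by simp
qed



lemma mono_strict:
  fixes B :: "'b set" and w :: "'b \<Rightarrow> real" and e :: "'b \<Rightarrow> nat"
  assumes fin: "finite B" and w: "\<forall>b\<in>B. w b \<ge> 0 \<and> e b < D"
    and b0: "b0 \<in> B" "w b0 > 0" and t: "0 < t" "t < u"
    and S: "(\<Sum>b\<in>B. w b * t ^ e b) \<le> t ^ D"
  shows "(\<Sum>b\<in>B. w b * u ^ e b) < u ^ D"
proof -
  define l where "l = u / t"
  have l: "l > 1" unfolding l_def using t by simp
  have u: "u = l * t" unfolding l_def using t by simp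
  have "(\<Sum>b\<in>B. w b * u ^ e b) = (\<Sum>b\<in>B. w b * l ^ e b * t ^ e b)"
    unfolding u by (simp add: power_mult_distrib mult.assoc)
  also have "... < (\<Sum>b\<in>B. w b * l ^ D * t ^ e b)"
  proof (rule sum_strict_mono_ex1[OF fin])
    show "\<forall>x\<in>B. w x * l ^ e x * t ^ e x \<le> w x * l ^ D * t ^ e x"
    proof
      fix x assume x: "x \<in> B"
      have "l ^ e x \<le> l ^ D" using w x l by (intro power_increasing) auto
      then show "w x * l ^ e x * t ^ e x \<le> w x * l ^ D * t ^ e x"
        using w x t by (intro mult_right_mono mult_left_mono) auto
    qed
    have "l ^ e b0 < l ^ D" using w b0 l by (intro power_strict_increasing) auto
    then have "w b0 * l ^ e b0 * t ^ e b0 < w b0 * l ^ D * t ^ e b0"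
      using b0 t by (intro mult_strict_right_mono mult_strict_left_mono) auto
    then show "\<exists>a\<in>B. w a * l ^ e a * t ^ e a < w a * l ^ D * t ^ e a" using b0 by blast
  qed
  also have "... = l ^ D * (\<Sum>b\<in>B. w b * t ^ e b)"
    by (simp add: sum_distrib_left algebra_simps)
  also have "... \<le> l ^ D * t ^ D" using S l by (intro mult_left_mono) auto
  also have "... = u ^ D" unfolding u by (simp add: power_mult_distrib)
  finally show ?thesis .
qed

lemma cbound_prop:
  fixes B :: "'b set" and w :: "'b \<Rightarrow> real" and e :: "'b \<Rightarrow> nat"
  assumes fin: "finite B" and w: "\<forall>b\<in>B. w b \<ge> 0 \<and> e b < D"
    and b0: "b0 \<in> B" "w b0 > 0"
    and k: "k \<ge> Cbound (monom 1 D - (\<Sum>b\<in>B. monom (w b) (e b)))"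
  shows "k > 0 \<and> (\<Sum>b\<in>B. w b * k ^ e b) \<le> k ^ D"
proof -
  define p where "p = monom 1 D - (\<Sum>b\<in>B. monom (w b) (e b))"
  define S where "S t = (\<Sum>b\<in>B. w b * t ^ e b)" for t :: real
  have pS: "poly p t = t ^ D - S t" for t unfolding p_def S_def by (simp add: poly_sum poly_monom)
  define W where "W = (\<Sum>b\<in>B. w b)"
  have Wge: "W \<ge> w b0" unfolding W_def using fin b0 w by (intro member_le_sum) auto
  have Dpos: "D \<ge> 1" using w b0 by fastforce
  have nm: "p \<noteq> monom 1 (degree p)"
  proof
    assume "p = monom 1 (degree p)"
    then have "poly p 1 = 1" by (metis poly_monom mult_1 power_one)
    moreover have "S 1 = W" unfolding S_def W_def by simp
    ultimately show False using pS[of 1] Wge b0 by simp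
  qed
  define t1 where "t1 = min 1 (w b0) / 2"
  define t2 where "t2 = W + 1"
  have t1: "0 < t1" "t1 \<le> 1" "t1 < w b0" "t1 < 1" unfolding t1_def using b0 by auto
  have t2: "1 \<le> t2" unfolding t2_def using Wge b0 by simp
  have "poly p t1 < 0"
  proof -
    have "w b0 * t1 ^ (D - 1) \<le> w b0 * t1 ^ e b0"
      using w b0 t1 by (intro mult_left_mono power_decreasing) auto
    also have "... \<le> S t1" unfolding S_def using fin b0 w t1
      by (intro member_le_sum[of b0 B "\<lambda>b. w b * t1 ^ e b"]) auto
    finally have "w b0 * t1 ^ (D - 1) \<le> S t1" .
    moreover have "t1 ^ D = t1 * t1 ^ (D - 1)" using Dpos by (metis Suc_diff_le diff_Suc_1 power_Suc)
    moreover have "t1 * t1 ^ (D - 1) < w b0 * t1 ^ (D - 1)" using t1 by simp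
    ultimately show ?thesis using pS[of t1] by simp
  qed
  moreover have "poly p t2 > 0"
  proof -
    have "S t2 \<le> (\<Sum>b\<in>B. w b * t2 ^ (D - 1))" unfolding S_def
      using w t2 by (intro sum_mono mult_left_mono power_increasing) auto
    also have "... = W * t2 ^ (D - 1)" unfolding W_def by (simp add: sum_distrib_right)
    also have "... < t2 * t2 ^ (D - 1)" using t2 unfolding t2_def by simp
    also have "... = t2 ^ D" using Dpos by (metis Suc_diff_le diff_Suc_1 power_Suc)
    finally show ?thesis using pS[of t2] by simp
  qed
  moreover have "t1 < t2" using t1 t2 by simp
  ultimately obtain r where r: "t1 < r" "r < t2" "poly p r = 0" using poly_IVT_pos by blast
  have rpos: "r > 0" using r t1 by simp
  have Sr: "S r = r ^ D" using r pS[of r] by simp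
  have uniq: "s = r" if "s > 0" "poly p s = 0" for s
  proof (rule ccontr)
    assume "s \<noteq> r"
    have Ss: "S s = s ^ D" using that pS[of s] by simp
    show False
    proof (cases "s < r")
      case True
      have "S r < r ^ D" unfolding S_def
        by (rule mono_strict[OF fin w b0 \<open>s>0\<close> True]) (use Ss S_def in simp)
      then show ?thesis using Sr by simp
    next
      case False
      then have "r < s" using \<open>s \<noteq> r\<close> by simp
      have "S s < s ^ D" unfolding S_def
        by (rule mono_strict[OF fin w b0 rpos \<open>r<s\<close>]) (use Sr S_def in simp)
      then show ?thesis using Ss by simp
    qed
  qed
  have "Cbound p = r" unfolding Cbound_def using nm
    by (auto intro!: the_equality simp: rpos r uniq)
  then have kr: "k \<ge> r" using k unfolding p_def by simp
  have "S k \<le> k ^ D"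
  proof (cases "k = r")
    case True then show ?thesis using Sr by simp
  next
    case False
    then have "r < k" using kr by simp
    show ?thesis unfolding S_def
      using mono_strict[OF fin w b0 rpos \<open>r<k\<close>] Sr unfolding S_def by simp
  qed
  then show ?thesis using kr rpos unfolding S_def by simp
qed

lemma aux_ring:
  fixes x c D K L F P :: real
  shows "x * (c / D * (K / L)) * (F * P) = 1 / D * x * c * P * K * (F / L)"
  by (simp add: field_simps)

lemma aux_nonneg:
  fixes P q :: real and x :: nat
  assumes "0 < P" "0 < q"
  shows "0 \<le> real x * P * q \<and> (real x * P * q = 0 \<longleftrightarrow> x = 0)"
  using assms by simp

theorem corollary4p1:
  fixes n d :: nat and f :: "(nat \<Rightarrow> nat) \<Rightarrow> real" and k :: real
  assumes "is_mpoly n f"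
    and "total_degree n f = 2 * d"
    and "d > 0"
    and "\<forall>\<alpha>\<in>Delta n d f. mdeg n \<alpha> < 2 * d"
    and "\<forall>i<n. top_coeff d f i > 0"
    and "\<forall>i<n. k \<ge> Cbound (monom 1 (2 * d) -
            (\<Sum>\<alpha>\<in>Delta n d f. monom (1 / real (2 * d) * real (\<alpha> i) * \<bar>f \<alpha>\<bar> *
                 top_coeff d f i powr (- real (mdeg n \<alpha>) / real (2 * d))) (mdeg n \<alpha>)))"
  shows "f_gp n d f \<ge> ereal (const_coeff f - 1 / real (2 * d) *
            (\<Sum>\<alpha>\<in>Delta n d f. real (2 * d - mdeg n \<alpha>) * \<bar>f \<alpha>\<bar> * k ^ mdeg n \<alpha> *
               (\<Prod>i<n. top_coeff d f i powr (- real (\<alpha> i))) powr (1 / real (2 * d))))"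
proof -
  let ?D = "Delta n d f"
  have sub: "?D \<subseteq> {\<alpha>. f \<alpha> \<noteq> 0}" unfolding Delta_def Omega_def by auto
  have fin: "finite ?D" using assms(1) sub unfolding is_mpoly_def by (meson finite_subset)
  have mem: "f \<alpha> \<noteq> 0" "\<alpha> \<noteq> (\<lambda>_. 0)" "\<forall>i\<ge>n. \<alpha> i = 0" "mdeg n \<alpha> < 2*d"
    if "\<alpha> \<in> ?D" for \<alpha>
    using that assms(1,4) unfolding Delta_def Omega_def is_mpoly_def by auto
  have exi: "\<exists>i<n. 0 < \<alpha> i" if "\<alpha> \<in> ?D" for \<alpha>
  proof (rule ccontr)
    assume "\<not> ?thesis"
    then have "\<alpha> = (\<lambda>_. 0)" using mem(3)[OF that] by (metis gr0I leI)
    then show False using mem(2)[OF that] by simp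
  qed
  have Fpos: "top_coeff d f i > 0" if "i < n" for i using assms(5) that by simp
  define w where "w i \<beta> = 1 / real (2 * d) * real (\<beta> i) * \<bar>f \<beta>\<bar> *
                 top_coeff d f i powr (- real (mdeg n \<beta>) / real (2 * d))" for i \<beta>
  have cb: "k > 0 \<and> (\<Sum>\<beta>\<in>?D. w i \<beta> * k ^ mdeg n \<beta>) \<le> k ^ (2*d)"
    if i: "i < n" and b0: "b0 \<in> ?D" "0 < b0 i" for i b0
  proof (rule cbound_prop[OF fin, of "w i" "mdeg n" "2*d" b0])
    show "\<forall>b\<in>?D. 0 \<le> w i b \<and> mdeg n b < 2 * d" using mem(4) unfolding w_def by auto
    show "b0 \<in> ?D" by fact
    show "0 < w i b0" unfolding w_def using b0 mem(1)[OF b0(1)] Fpos[OF i] assms(3) by simp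
    show "Cbound (monom 1 (2 * d) - (\<Sum>b\<in>?D. monom (w i b) (mdeg n b))) \<le> k"
      using assms(6) i unfolding w_def by simp
  qed
  have kpos: "k > 0" if "\<alpha> \<in> ?D" for \<alpha> using exi[OF that] cb that by blast
  define a where "a \<beta> i = real (\<beta> i) * (\<bar>f \<beta>\<bar> / real (2*d) * (k ^ mdeg n \<beta> / k ^ (2*d))) *
       top_coeff d f i powr (1 - real (mdeg n \<beta>) / real (2*d))" for \<beta> i
  define rL where "rL = const_coeff f - 1 / real (2 * d) *
            (\<Sum>\<alpha>\<in>Delta n d f. real (2 * d - mdeg n \<alpha>) * \<bar>f \<alpha>\<bar> * k ^ mdeg n \<alpha> *
               (\<Prod>i<n. top_coeff d f i powr (- real (\<alpha> i))) powr (1 / real (2 * d)))"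
  have C1: "\<forall>\<alpha>\<in>?D. \<forall>i<n. a \<alpha> i \<ge> 0 \<and> (a \<alpha> i = 0 \<longleftrightarrow> \<alpha> i = 0)"
  proof (intro ballI allI impI)
    fix \<alpha> i assume al: "\<alpha> \<in> ?D" and i: "i < n"
    have p: "\<bar>f \<alpha>\<bar> / real (2*d) * (k ^ mdeg n \<alpha> / k ^ (2*d)) > 0"
      using kpos[OF al] mem(1)[OF al] assms(3) by simp
    have q: "top_coeff d f i powr (1 - real (mdeg n \<alpha>) / real (2*d)) > 0"
      using Fpos[OF i] by simp
    show "a \<alpha> i \<ge> 0 \<and> (a \<alpha> i = 0 \<longleftrightarrow> \<alpha> i = 0)"
      unfolding a_def by (rule aux_nonneg[OF p q])
  qed
  have C3: "\<forall>i<n. top_coeff d f i \<ge> (\<Sum>\<alpha>\<in>?D. a \<alpha> i)"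
  proof (intro allI impI)
    fix i assume i: "i < n"
    show "top_coeff d f i \<ge> (\<Sum>\<alpha>\<in>?D. a \<alpha> i)"
    proof (cases "\<exists>b0\<in>?D. 0 < b0 i")
      case False
      then have "\<forall>\<alpha>\<in>?D. a \<alpha> i = 0" unfolding a_def by auto
      then show ?thesis using Fpos[OF i] by simp
    next
      case True
      then obtain b0 where b0: "b0 \<in> ?D" "0 < b0 i" by blast
      note c = cb[OF i b0]
      let ?F = "top_coeff d f i"
      have eq: "a \<beta> i = w i \<beta> * k ^ mdeg n \<beta> * (?F / k ^ (2*d))" for \<beta>
      proof -
        have eqF: "?F powr (1 - real (mdeg n \<beta>) / real (2*d)) = ?F * ?F powr (- real (mdeg n \<beta>) / real (2*d))"
          unfolding diff_conv_add_uminus powr_add using Fpos[OF i] by simp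
        show ?thesis unfolding a_def w_def eqF by (rule aux_ring)
      qed
      have "(\<Sum>\<alpha>\<in>?D. a \<alpha> i) = (\<Sum>\<alpha>\<in>?D. w i \<alpha> * k ^ mdeg n \<alpha>) * (?F / k ^ (2*d))"
        unfolding eq by (rule sum_distrib_right[symmetric])
      also have "... \<le> k ^ (2*d) * (?F / k ^ (2*d))"
        using c Fpos[OF i] by (intro mult_right_mono) auto
      also have "... = ?F" using c by simp
      finally show ?thesis .
    qed
  qed
  have termeq: "real (2*d - mdeg n \<alpha>) *
        ((\<bar>f \<alpha>\<bar> ^ (2*d) * vpow n (\<lambda>i. real (\<alpha> i)) \<alpha>) /
           ((2 * real d) ^ (2*d) * vpow n (a \<alpha>) \<alpha>)) powr (1 / real (2*d - mdeg n \<alpha>))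
      = real (2 * d - mdeg n \<alpha>) * \<bar>f \<alpha>\<bar> * k ^ mdeg n \<alpha> *
               (\<Prod>i<n. top_coeff d f i powr (- real (\<alpha> i))) powr (1 / real (2 * d)) / real (2*d)"
    if al: "\<alpha> \<in> ?D" for \<alpha>
  proof -
    define m where "m = mdeg n \<alpha>"
    define K where "K = \<bar>f \<alpha>\<bar> / real (2*d) * (k ^ m / k ^ (2*d))"
    define s where "s = 1 - real m / real (2*d)"
    define Q where "Q = (\<Prod>i<n. top_coeff d f i powr real (\<alpha> i))"
    define A where "A = vpow n (\<lambda>i. real (\<alpha> i)) \<alpha>"
    have Qpos: "Q > 0" unfolding Q_def
    proof (intro prod_pos)
      fix i assume "i \<in> {..<n}"
      then have "top_coeff d f i > 0" using Fpos by simp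
      then show "top_coeff d f i powr real (\<alpha> i) > 0" by simp
    qed
    have Apos: "A > 0" unfolding A_def vpow_def
      by (intro prod_pos) (auto simp: zero_less_power)
    have V: "vpow n (a \<alpha>) \<alpha> = A * K ^ m * Q powr s"
    proof -
      have "vpow n (a \<alpha>) \<alpha> = (\<Prod>i<n. real (\<alpha> i) ^ \<alpha> i * K ^ \<alpha> i * (top_coeff d f i powr s) ^ \<alpha> i)"
      proof -
        have ai: "a \<alpha> i = real (\<alpha> i) * K * top_coeff d f i powr s" for i
          unfolding a_def K_def s_def m_def by (rule refl)
        show ?thesis unfolding vpow_def ai by (simp only: power_mult_distrib)
      qed
      also have "... = A * K ^ m * (\<Prod>i<n. (top_coeff d f i powr s) ^ \<alpha> i)"
        unfolding A_def vpow_def m_def mdeg_def by (simp add: prod.distrib power_sum)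
      also have "(\<Prod>i<n. (top_coeff d f i powr s) ^ \<alpha> i) = (\<Prod>i<n. (top_coeff d f i powr real (\<alpha> i)) powr s)"
      proof (intro prod.cong refl)
        fix i assume "i \<in> {..<n}"
        then have Fi: "top_coeff d f i \<noteq> 0" using Fpos by (simp add: less_imp_neq[symmetric])
        show "(top_coeff d f i powr s) ^ \<alpha> i = (top_coeff d f i powr real (\<alpha> i)) powr s"
          unfolding powr_power[OF Fi] powr_powr by (simp only: mult.commute)
      qed
      also have "... = Q powr s" unfolding Q_def by (simp add: prod_powr_distrib)
      finally show ?thesis .
    qed
    have P: "(\<Prod>i<n. top_coeff d f i powr (- real (\<alpha> i))) powr (1 / real (2 * d)) = Q powr (- 1 / real (2*d))"
    proof -
      have "(\<Prod>i<n. top_coeff d f i powr (- real (\<alpha> i))) = (\<Prod>i<n. (top_coeff d f i powr real (\<alpha> i)) powr (-1))"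
        by (intro prod.cong refl) (simp only: powr_powr mult_minus_right mult_1_right)
      also have "... = Q powr (-1)" unfolding Q_def by (rule prod_powr_distrib[symmetric])
      finally have h: "(\<Prod>i<n. top_coeff d f i powr (- real (\<alpha> i))) = Q powr (-1)" .
      show ?thesis unfolding h powr_powr by simp
    qed
    have key: "real (2*d - m) * ((\<bar>f \<alpha>\<bar> ^ (2*d) * A) / (real (2*d) ^ (2*d) * (A * (\<bar>f \<alpha>\<bar> / real (2*d) * (k^m / k^(2*d))) ^ m
            * Q powr (1 - real m / real (2*d))))) powr (1 / real (2*d - m))
         = real (2*d-m) * (\<bar>f \<alpha>\<bar> * k^m * Q powr (- 1 / real (2*d))) / real (2*d)"
      by (rule key_alg) (use mem[OF al] kpos[OF al] Qpos Apos in \<open>auto simp: m_def\<close>)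
    show ?thesis using key unfolding V P A_def[symmetric] m_def[symmetric] K_def[symmetric] s_def[symmetric]
      by (simp only: of_nat_mult of_nat_numeral mult.assoc)
  qed
  have rin: "rL \<in> gp_set n d f"
    unfolding gp_set_def mem_Collect_eq
  proof (intro exI[of _ a] conjI)
    show "\<forall>\<alpha>\<in>?D. \<forall>i<n. a \<alpha> i \<ge> 0 \<and> (a \<alpha> i = 0 \<longleftrightarrow> \<alpha> i = 0)" by (rule C1)
    show "\<forall>\<alpha>\<in>?D. mdeg n \<alpha> = 2*d \<longrightarrow>
        (2 * real d) ^ (2*d) * vpow n (a \<alpha>) \<alpha> = \<bar>f \<alpha>\<bar> ^ (2*d) * vpow n (\<lambda>i. real (\<alpha> i)) \<alpha>"
      using mem(4) by fastforce
    show "\<forall>i<n. top_coeff d f i \<ge> (\<Sum>\<alpha>\<in>?D. a \<alpha> i)" by (rule C3)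
    have set: "{\<alpha>\<in>?D. mdeg n \<alpha> < 2*d} = ?D" using mem(4) by auto
    show "const_coeff f - rL \<ge> (\<Sum>\<alpha>\<in>{\<alpha>\<in>?D. mdeg n \<alpha> < 2*d}.
        real (2*d - mdeg n \<alpha>) *
        ((\<bar>f \<alpha>\<bar> ^ (2*d) * vpow n (\<lambda>i. real (\<alpha> i)) \<alpha>) /
           ((2 * real d) ^ (2*d) * vpow n (a \<alpha>) \<alpha>)) powr (1 / real (2*d - mdeg n \<alpha>)))"
      unfolding set rL_def using termeq by (simp add: sum_divide_distrib[symmetric])
  qed
  show ?thesis unfolding f_gp_def rL_def[symmetric] using rin by (intro Sup_upper imageI)
qed

end
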